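(* For twisted knot diagrams $K$ with an odd number of bars, each integer $a_n(K)$ ($n\in\mathbb{Z}$), equivalently the polynomial $T_o(K)=\sum_{n\in\mathbb{Z}}a_n(K)t^n$, is invariant under generalized Reidemeister moves and twisted Reidemeister moves, hence is a twisted knot invariant.
   Context: A twisted knot diagram is a virtual knot diagram with finitely many bars on its edges; twisted knots are equivalence classes under the generalized Reidemeister moves and the twisted moves $\Omega_1^t$ (a bar passes through a virtual crossing), $\Omega_2^t$ (two adjacent bars cancel), $\Omega_3^t$ (a real crossing is replaced by the crossing with over/under exchanged and a bar added on each of its four adjacent semiarcs); the parity of the number of bars is preserved. Segments are the pieces between real crossings and bars. A coloring by $(\mathbb{Z}, a\ast b=a\circ b=a+1, f(a)=-a)$ labels segments by integers so that at each real crossing, with $x$ the label of the under-strand segment to the right of the over-strand and $y$ the label of the over-strand segment to the right of the under-strand (right with respect to strand orientations), the other under-segment is labeled $x+1$ and the other over-segment $y+1$, and labels on the two sides of a bar are negatives of each other. When the number of bars is odd this coloring exists and is unique; the index of a real crossing $c$ is then $\mathrm{Ind}(c)=y-x$. With $w(c)$ the writhe and $w(K)=\sum_c w(c)$: $a_n(K)=\sum_{\mathrm{Ind}(c)=n}w(c)$ for $n\neq0$ and $a_0(K)=\sum_{\mathrm{Ind}(c)=0}w(c)-w(K)$. *)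

theory Defs
  imports Main
begin

text \<open>
  Twisted knot diagrams are encoded by their (twisted) Gauss data: the cyclic sequence of
  events met when travelling once along the oriented knot.  Virtual crossings
  leave no trace in this encoding.  The second component assigns to each crossing label
  its sign (True = positive crossing, writhe +1).
\<close>

datatype event = OverP nat | UnderP nat | Bar

type_synonym diagram = "event list \<times> (nat \<Rightarrow> bool)"

definition wf_diag :: "event list \<Rightarrow> bool" where
  "wf_diag w \<longleftrightarrow>
     (\<forall>c. count_list w (OverP c) = count_list w (UnderP c) \<and> count_list w (OverP c) \<le> 1)"

definition crossings :: "event list \<Rightarrow> nat set" where
  "crossings w = {c. OverP c \<in> set w}"

definition nbars :: "event list \<Rightarrow> nat" where
  "nbars w = count_list w Bar"

definition wr :: "(nat \<Rightarrow> bool) \<Rightarrow> nat \<Rightarrow> int" where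
  "wr s c = (if s c then 1 else -1)"

definition writhe :: "diagram \<Rightarrow> int" where
  "writhe D = (\<Sum>c\<in>crossings (fst D). wr (snd D) c)"

text \<open>Segment i is the piece of the knot right after event i; the segment before event i
  is segment prv n i (indices modulo the length n of the word).\<close>
definition prv :: "nat \<Rightarrow> nat \<Rightarrow> nat" where
  "prv n i = (i + n - 1) mod n"

text \<open>Colorings by (Z, a*b = a o b = a+1, f(a) = -a).  At a positive crossing the under
  segment to the right of the over strand is the incoming under segment and the over
  segment to the right of the under strand is the outgoing over segment; at a negative
  crossing these are the outgoing under segment and the incoming over segment.  Hence
  along the under strand the label changes by +w(c), along the over strand by -w(c), and
  across a bar it is negated.\<close>
definition is_coloring :: "diagram \<Rightarrow> int list \<Rightarrow> bool" where
  "is_coloring D col \<longleftrightarrow>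
     length col = length (fst D) \<and>
     (\<forall>i < length (fst D).
        (case fst D ! i of
           Bar \<Rightarrow> col ! i = - (col ! prv (length (fst D)) i)
         | UnderP c \<Rightarrow> col ! i = col ! prv (length (fst D)) i + wr (snd D) c
         | OverP c \<Rightarrow> col ! i = col ! prv (length (fst D)) i - wr (snd D) c))"

definition coloring :: "diagram \<Rightarrow> int list" where
  "coloring D = (THE col. is_coloring D col)"

definition pos :: "event list \<Rightarrow> event \<Rightarrow> nat" where
  "pos w e = (THE i. i < length w \<and> w ! i = e)"

text \<open>Ind(c) = y - x.  Positive: y = outgoing over label, x = incoming under label.
  Negative: y = incoming over label, x = outgoing under label.\<close>
definition ind :: "diagram \<Rightarrow> nat \<Rightarrow> int" where
  "ind D c =
     (let w = fst D; col = coloring D; n = length w;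
          i = pos w (OverP c); j = pos w (UnderP c)
      in if snd D c then col ! i - col ! prv n j
         else col ! prv n i - col ! j)"

definition acoef :: "diagram \<Rightarrow> int \<Rightarrow> int" where
  "acoef D n =
     (\<Sum>c\<in>{c \<in> crossings (fst D). ind D c = n}. wr (snd D) c)
     - (if n = 0 then writhe D else 0)"

definition agree :: "nat set \<Rightarrow> (nat \<Rightarrow> bool) \<Rightarrow> (nat \<Rightarrow> bool) \<Rightarrow> bool" where
  "agree A s s' \<longleftrightarrow> (\<forall>c\<in>A. s c = s' c)"

fun map_ev :: "(nat \<Rightarrow> nat) \<Rightarrow> event \<Rightarrow> event" where
  "map_ev f (OverP c) = OverP (f c)"
| "map_ev f (UnderP c) = UnderP (f c)"
| "map_ev f Bar = Bar"

text \<open>Trivial identifications of Gauss data (same diagram): rotation of the cyclic word,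
  renaming of crossings, changing signs of labels that are not crossings.\<close>
definition triv_move :: "diagram \<Rightarrow> diagram \<Rightarrow> bool" where
  "triv_move D D' \<longleftrightarrow>
     (fst D' = rotate1 (fst D) \<and> snd D' = snd D)
   \<or> (\<exists>f. inj f \<and> fst D' = map (map_ev f) (fst D) \<and> (\<forall>c. snd D' (f c) = snd D c))
   \<or> (fst D' = fst D \<and> agree (crossings (fst D)) (snd D) (snd D'))"

text \<open>Reidemeister move I (all four oriented versions).\<close>
definition R1_move :: "diagram \<Rightarrow> diagram \<Rightarrow> bool" where
  "R1_move D D' \<longleftrightarrow>
     (\<exists>A B c. fst D = A @ B \<and> c \<notin> crossings (fst D) \<and>
        (fst D' = A @ [OverP c, UnderP c] @ B \<or> fst D' = A @ [UnderP c, OverP c] @ B) \<and>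
        agree (crossings (fst D)) (snd D) (snd D'))"

text \<open>Reidemeister move II: one strand passes over another twice; the two new crossings
  have opposite signs; the two strands run in the same or opposite directions.\<close>
definition R2_move :: "diagram \<Rightarrow> diagram \<Rightarrow> bool" where
  "R2_move D D' \<longleftrightarrow>
     (\<exists>A B C c d. fst D = A @ B @ C \<and> c \<noteq> d \<and>
        c \<notin> crossings (fst D) \<and> d \<notin> crossings (fst D) \<and>
        (fst D' = A @ [OverP c, OverP d] @ B @ [UnderP c, UnderP d] @ C \<or>
         fst D' = A @ [OverP c, OverP d] @ B @ [UnderP d, UnderP c] @ C) \<and>
        snd D' c \<noteq> snd D' d \<and>
        agree (crossings (fst D)) (snd D) (snd D'))"

text \<open>Crossings a (top over middle), b (top over bottom) and
  c (middle over bottom).  Each of the three strands carries two consecutive events; the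
  move reverses the order on each strand and keeps all signs.  The admissible orders are
  exactly those realised by three oriented lines in the plane forming a small triangle:
  for some e in {1,-1}, on the top strand a precedes b iff e = -w(b), on the middle strand
  a precedes c iff e = -w(c), on the bottom strand b precedes c iff e = -w(a)w(b)w(c).\<close>
definition R3_pairs :: "(nat \<Rightarrow> bool) \<Rightarrow> int \<Rightarrow> nat \<Rightarrow> nat \<Rightarrow> nat \<Rightarrow>
    event list \<times> event list \<times> event list" where
  "R3_pairs s e a b c =
     ((if e = - wr s b then [OverP a, OverP b] else [OverP b, OverP a]),
      (if e = - wr s c then [UnderP a, OverP c] else [OverP c, UnderP a]),
      (if e = - (wr s a * wr s b * wr s c) then [UnderP b, UnderP c] else [UnderP c, UnderP b]))"

definition R3_move :: "diagram \<Rightarrow> diagram \<Rightarrow> bool" where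
  "R3_move D D' \<longleftrightarrow>
     snd D' = snd D \<and>
     (\<exists>e a b c pT pM pB A B C E X1 X2 X3.
        e \<in> {1, -1} \<and> R3_pairs (snd D) e a b c = (pT, pM, pB) \<and>
        (X1, X2, X3) \<in> {(pT, pM, pB), (pT, pB, pM), (pM, pT, pB),
                         (pM, pB, pT), (pB, pT, pM), (pB, pM, pT)} \<and>
        fst D = A @ X1 @ B @ X2 @ C @ X3 @ E \<and>
        fst D' = A @ rev X1 @ B @ rev X2 @ C @ rev X3 @ E)"

definition T2_move :: "diagram \<Rightarrow> diagram \<Rightarrow> bool" where
  "T2_move D D' \<longleftrightarrow> snd D' = snd D \<and>
     (\<exists>A B. fst D = A @ [Bar, Bar] @ B \<and> fst D' = A @ B)"

text \<open>Twisted move III: over/under information of crossing c is exchanged and a bar is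
  put on each of the four semiarcs adjacent to c (the sign of c, computed from the
  resulting diagram, is unchanged).\<close>
definition T3_move :: "diagram \<Rightarrow> diagram \<Rightarrow> bool" where
  "T3_move D D' \<longleftrightarrow> snd D' = snd D \<and>
     (\<exists>A B C c.
        (fst D = A @ [OverP c] @ B @ [UnderP c] @ C \<and>
         fst D' = A @ [Bar, UnderP c, Bar] @ B @ [Bar, OverP c, Bar] @ C)
      \<or> (fst D = A @ [UnderP c] @ B @ [OverP c] @ C \<and>
         fst D' = A @ [Bar, OverP c, Bar] @ B @ [Bar, UnderP c, Bar] @ C))"

text \<open>Virtual Reidemeister moves, the mixed move and twisted move I do not change the
  Gauss data, so they are identities in this encoding.\<close>
definition tw_step :: "diagram \<Rightarrow> diagram \<Rightarrow> bool" where
  "tw_step D D' \<longleftrightarrow> wf_diag (fst D) \<and> wf_diag (fst D') \<and>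
     (triv_move D D' \<or> R1_move D D' \<or> R2_move D D' \<or> R3_move D D' \<or>
      T2_move D D' \<or> T3_move D D')"

inductive tw_equiv :: "diagram \<Rightarrow> diagram \<Rightarrow> bool" where
  refl: "tw_equiv D D"
| step: "tw_step D D' \<Longrightarrow> tw_equiv D D'"
| sym: "tw_equiv D D' \<Longrightarrow> tw_equiv D' D"
| trans: "tw_equiv D D' \<Longrightarrow> tw_equiv D' D'' \<Longrightarrow> tw_equiv D D''"

end

theory Submission
  imports Defs
begin

fun stp :: "(nat \<Rightarrow> bool) \<Rightarrow> event \<Rightarrow> int \<Rightarrow> int" where
  "stp s (OverP c) x = x - wr s c"
| "stp s (UnderP c) x = x + wr s c"
| "stp s Bar x = - x"

definition fp :: "(nat \<Rightarrow> bool) \<Rightarrow> event list \<Rightarrow> int" where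
  "fp s w = (THE x. fold (stp s) w x = x)"

definition bef :: "(nat \<Rightarrow> bool) \<Rightarrow> event list \<Rightarrow> event \<Rightarrow> int \<Rightarrow> int" where
  "bef s w e = fold (stp s) (takeWhile (\<lambda>x. x \<noteq> e) w)"

definition II :: "(nat \<Rightarrow> bool) \<Rightarrow> event list \<Rightarrow> nat \<Rightarrow> int" where
  "II s w c = bef s w (OverP c) (fp s w) - bef s w (UnderP c) (fp s w) - wr s c"

definition FF :: "(nat \<Rightarrow> bool) \<Rightarrow> event list \<Rightarrow> int \<Rightarrow> int" where
  "FF s w n = (\<Sum>c\<in>crossings w. if II s w c = n then wr s c else 0)
     - (if n = 0 then (\<Sum>c\<in>crossings w. wr s c) else 0)"

lemma wr_cases: "wr s c = 1 \<or> wr s c = -1"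
  by (simp add: wr_def)

lemma fold_affine:
  "fold (stp s) w x = (if even (nbars w) then x else - x) + fold (stp s) w 0"
proof (induction w arbitrary: x)
  case Nil
  then show ?case by (simp add: nbars_def)
next
  case (Cons e w)
  have "fold (stp s) (e # w) x = fold (stp s) w (stp s e x)" by simp
  also have "\<dots> = (if even (nbars w) then stp s e x else - stp s e x) + fold (stp s) w 0"
    using Cons by blast
  finally show ?case using Cons[of "stp s e 0"]
    by (cases e) (auto simp: nbars_def)
qed

lemma par1: "even ((F::int) + (x - d) + L) \<Longrightarrow> d = 1 \<or> d = -1 \<Longrightarrow> even (F + x + (L + 1))"
  by presburger

lemma par2: "even ((F::int) + (x + d) + L) \<Longrightarrow> d = 1 \<or> d = -1 \<Longrightarrow> even (F + x + (L + 1))"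
  by presburger

lemma par3: "even ((F::int) + (- x) + L) \<Longrightarrow> even (F + x + L)"
  by presburger

lemma fold_parity:
  "even (fold (stp s) w x + x + int (length (filter (\<lambda>e. e \<noteq> Bar) w)))"
proof (induction w arbitrary: x)
  case Nil
  then show ?case by simp
next
  case (Cons e w)
  let ?L = "int (length (filter (\<lambda>e. e \<noteq> Bar) w))"
  show ?case
  proof (cases e)
    case (OverP c)
    have "even (fold (stp s) w (x - wr s c) + (x - wr s c) + ?L)"
      using Cons by blast
    then have "even (fold (stp s) w (x - wr s c) + x + (?L + 1))"
      using par1 wr_cases by blast
    then show ?thesis using OverP by simp
  next
    case (UnderP c)
    have "even (fold (stp s) w (x + wr s c) + (x + wr s c) + ?L)"
      using Cons by blast
    then have "even (fold (stp s) w (x + wr s c) + x + (?L + 1))"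
      using par2 wr_cases by blast
    then show ?thesis using UnderP by simp
  next
    case Bar
    have "even (fold (stp s) w (- x) + (- x) + ?L)"
      using Cons by blast
    then have "even (fold (stp s) w (- x) + x + ?L)"
      using par3 by blast
    then show ?thesis using Bar by simp
  qed
qed

lemma count_filter: "count_list (filter P w) x = (if P x then count_list w x else 0)"
  by (induction w) auto

lemma finite_crossings: "finite (crossings w)"
proof -
  have "crossings w \<subseteq> (\<lambda>e. case e of OverP c \<Rightarrow> c | _ \<Rightarrow> 0) ` set w"
    unfolding crossings_def by force
  then show ?thesis using finite_surj by blast
qed

lemma wf_under: "wf_diag w \<Longrightarrow> UnderP c \<in> set w \<Longrightarrow> c \<in> crossings w"
proof -
  assume w: "wf_diag w" and u: "UnderP c \<in> set w"
  have "count_list w (UnderP c) \<noteq> 0" using u by (simp add: count_list_0_iff)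
  moreover have "count_list w (OverP c) = count_list w (UnderP c)"
    using w unfolding wf_diag_def by blast
  ultimately have "count_list w (OverP c) \<noteq> 0" by simp
  then show ?thesis by (simp add: count_list_0_iff crossings_def)
qed

lemma wf_count: "count_list w e \<le> 1" if "wf_diag w" "e \<noteq> Bar"
proof (cases e)
  case (UnderP c)
  have "count_list w (OverP c) = count_list w (UnderP c)" "count_list w (OverP c) \<le> 1"
    using that(1) unfolding wf_diag_def by blast+
  then show ?thesis using UnderP by simp
next
  case (OverP c)
  have "count_list w (OverP c) \<le> 1"
    using that(1) unfolding wf_diag_def by blast
  then show ?thesis using OverP by simp
qed (use that in simp)

lemma wf_even: assumes "wf_diag w" shows "even (length (filter (\<lambda>e. e \<noteq> Bar) w))"
proof -
  let ?C = "crossings w"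
  let ?X = "OverP ` ?C \<union> UnderP ` ?C"
  have fX: "finite ?X" using finite_crossings by blast
  have sub: "set (filter (\<lambda>e. e \<noteq> Bar) w) \<subseteq> ?X"
  proof
    fix e assume "e \<in> set (filter (\<lambda>e. e \<noteq> Bar) w)"
    then have ew: "e \<in> set w" "e \<noteq> Bar" by auto
    show "e \<in> ?X"
    proof (cases e)
      case (OverP c) then show ?thesis using \<open>e \<in> set w\<close> by (auto simp: crossings_def)
    next
      case (UnderP c) then show ?thesis using \<open>e \<in> set w\<close> wf_under[OF assms, of c] by auto
    qed (use ew in simp)
  qed
  have "length (filter (\<lambda>e. e \<noteq> Bar) w) = sum (count_list (filter (\<lambda>e. e \<noteq> Bar) w)) ?X"
    using sum_count_set[OF sub fX] by simp
  also have "\<dots> = sum (count_list w) ?X"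
    by (rule sum.cong) (auto simp: count_filter)
  also have "\<dots> = sum (count_list w) (OverP ` ?C) + sum (count_list w) (UnderP ` ?C)"
    by (rule sum.union_disjoint) (auto simp: finite_crossings)
  also have "\<dots> = (\<Sum>c\<in>?C. count_list w (OverP c)) + (\<Sum>c\<in>?C. count_list w (UnderP c))"
    by (simp add: sum.reindex inj_on_def)
  also have "\<dots> = (\<Sum>c\<in>?C. 2 * count_list w (OverP c))"
    using assms unfolding wf_diag_def by (simp add: sum.distrib[symmetric] mult_2)
  also have "\<dots> = 2 * (\<Sum>c\<in>?C. count_list w (OverP c))"
    by (simp add: sum_distrib_left)
  finally show ?thesis by simp
qed

lemma fp_ex:
  assumes "wf_diag w" "odd (nbars w)"
  shows "fold (stp s) w (fp s w) = fp s w"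
    and "fold (stp s) w y = y \<Longrightarrow> y = fp s w"
proof -
  have aff: "fold (stp s) w x = - x + fold (stp s) w 0" for x
  proof -
    have "fold (stp s) w x = (if even (nbars w) then x else - x) + fold (stp s) w 0"
      by (rule fold_affine)
    then show ?thesis using assms(2) by simp
  qed
  have "even (fold (stp s) w 0)"
    using fold_parity[of s w 0] wf_even[OF assms(1)] by simp
  then obtain k where k: "fold (stp s) w 0 = 2 * k" by blast
  have ex: "\<exists>!x. fold (stp s) w x = x"
  proof
    show "fold (stp s) w k = k" using aff[of k] k by simp
    fix y assume "fold (stp s) w y = y" then show "y = k" using aff[of y] k by simp
  qed
  then show "fold (stp s) w (fp s w) = fp s w" unfolding fp_def by (rule theI')
  show "fold (stp s) w y = y \<Longrightarrow> y = fp s w"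
    unfolding fp_def by (rule the1_equality[OF ex, symmetric])
qed


lemma tw_split: "e \<notin> set P \<Longrightarrow> takeWhile (\<lambda>x. x \<noteq> e) (P @ e # Q) = P"
  by (induction P) auto

lemma case_stp:
  "(case e of Bar \<Rightarrow> a = - b | UnderP c \<Rightarrow> a = b + wr s c | OverP c \<Rightarrow> a = b - wr s c)
   \<longleftrightarrow> a = stp s e b"
  by (cases e) auto

lemma prv_pos: "0 < i \<Longrightarrow> i < N \<Longrightarrow> prv N i = i - 1"
  unfolding prv_def
  by (metis Nat.add_diff_assoc2 One_nat_def Suc_leI add.commute less_imp_diff_less mod_add_self2 mod_less)

lemma prv_0: "0 < N \<Longrightarrow> prv N 0 = N - 1"
  unfolding prv_def by simp

lemma odd_nonempty: "odd (nbars w) \<Longrightarrow> w \<noteq> []"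
  by (auto simp: nbars_def)

definition col0 :: "(nat \<Rightarrow> bool) \<Rightarrow> event list \<Rightarrow> int list" where
  "col0 s w = map (\<lambda>i. fold (stp s) (take (Suc i) w) (fp s w)) [0..<length w]"

lemma col0_prv:
  assumes "wf_diag w" "odd (nbars w)" "i < length w"
  shows "col0 s w ! prv (length w) i = fold (stp s) (take i w) (fp s w)"
proof (cases "i = 0")
  case True
  have N: "0 < length w" using assms by auto
  then have "col0 s w ! prv (length w) i = fold (stp s) w (fp s w)"
    using True by (simp add: prv_0 col0_def)
  then show ?thesis using True fp_ex(1)[OF assms(1,2)] by simp
next
  case False
  then have "i - 1 < length w" "Suc (i - 1) = i" using assms(3) by auto
  then show ?thesis using assms(3) False by (simp add: prv_pos col0_def)
qed

lemma col0_nth: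
  assumes "i < length w"
  shows "col0 s w ! i = stp s (w ! i) (fold (stp s) (take i w) (fp s w))"
  using assms by (simp add: col0_def take_Suc_conv_app_nth)

lemma col0_is: assumes "wf_diag w" "odd (nbars w)"
  shows "is_coloring (w, s) (col0 s w)"
  unfolding is_coloring_def fst_conv snd_conv case_stp
proof (intro conjI allI impI)
  show "length (col0 s w) = length w" by (simp add: col0_def)
  fix i assume "i < length w"
  then show "col0 s w ! i = stp s (w ! i) (col0 s w ! prv (length w) i)"
    using col0_prv[OF assms] col0_nth by simp
qed

lemma col_unique: assumes "wf_diag w" "odd (nbars w)" "is_coloring (w, s) col"
  shows "col = col0 s w"
proof -
  let ?N = "length w"
  have N: "0 < ?N" using odd_nonempty[OF assms(2)] by simp
  have len: "length col = ?N" and rec: "\<And>i. i < ?N \<Longrightarrow> col ! i = stp s (w ! i) (col ! prv ?N i)"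
    using assms(3) unfolding is_coloring_def fst_conv snd_conv case_stp by auto
  define y where "y = col ! (?N - 1)"
  have key: "i < ?N \<Longrightarrow> col ! i = fold (stp s) (take (Suc i) w) y" for i
  proof (induction i)
    case 0
    then show ?case using rec[of 0] N by (simp add: prv_0 y_def take_Suc_conv_app_nth)
  next
    case (Suc i)
    then show ?case using rec[of "Suc i"] by (simp add: prv_pos take_Suc_conv_app_nth)
  qed
  have "y = fold (stp s) (take ?N w) y" using key[of "?N - 1"] N by (simp add: y_def)
  then have "y = fp s w" using fp_ex(2)[OF assms(1,2)] by simp
  then show ?thesis using key len
    by (intro nth_equalityI) (auto simp: col0_def)
qed

lemma coloring_eq: assumes "wf_diag w" "odd (nbars w)"
  shows "coloring (w, s) = col0 s w"
  unfolding coloring_def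
  using col0_is[OF assms] col_unique[OF assms] by (rule the_equality)

lemma pos_eq:
  assumes "count_list w e \<le> 1" "w = P @ e # Q"
  shows "pos w e = length P"
  unfolding pos_def
proof (rule the_equality)
  show "length P < length w \<and> w ! length P = e" using assms by simp
  fix i assume i: "i < length w \<and> w ! i = e"
  have cnt: "count_list P e = 0" "count_list Q e = 0" using assms by auto
  show "i = length P"
  proof (rule ccontr)
    assume "i \<noteq> length P"
    then consider "i < length P" | "i > length P" by linarith
    then show False
    proof cases
      case 1
      then have "e \<in> set P" using i assms(2) by (metis nth_append nth_mem)
      then show False using cnt count_list_0_iff by metis
    next
      case 2
      then have "w ! i = Q ! (i - Suc (length P))" using assms(2)
        by (simp add: nth_append)
      moreover have "i - Suc (length P) < length Q" using 2 i assms(2) by auto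
      ultimately have "e \<in> set Q" using i by (metis nth_mem)
      then show False using cnt count_list_0_iff by metis
    qed
  qed
qed

lemma split_first: "e \<in> set w \<Longrightarrow> \<exists>P Q. w = P @ e # Q \<and> e \<notin> set P"
  by (metis split_list_first)

lemma ind_eq:
  assumes "wf_diag w" "odd (nbars w)" "c \<in> crossings w"
  shows "ind (w, s) c = II s w c"
proof -
  have oc: "OverP c \<in> set w" using assms(3) by (simp add: crossings_def)
  have uc: "UnderP c \<in> set w" using assms(1,3) unfolding crossings_def wf_diag_def
    by (metis count_list_0_iff mem_Collect_eq)
  obtain P Q where PQ: "w = P @ OverP c # Q" "OverP c \<notin> set P" using split_first[OF oc] by blast
  obtain P' Q' where PQ': "w = P' @ UnderP c # Q'" "UnderP c \<notin> set P'" using split_first[OF uc] by blast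
  have pO: "pos w (OverP c) = length P" using pos_eq wf_count[OF assms(1)] PQ by blast
  have pU: "pos w (UnderP c) = length P'" using pos_eq wf_count[OF assms(1)] PQ' by blast
  have tO: "take (length P) w = P" "w ! length P = OverP c" "length P < length w" using PQ by auto
  have tU: "take (length P') w = P'" "w ! length P' = UnderP c" "length P' < length w" using PQ' by auto
  have bO: "bef s w (OverP c) = fold (stp s) P" unfolding bef_def using PQ tw_split by metis
  have bU: "bef s w (UnderP c) = fold (stp s) P'" unfolding bef_def using PQ' tw_split by metis
  show ?thesis
    unfolding ind_def II_def Let_def fst_conv snd_conv coloring_eq[OF assms(1,2)] pO pU
    using col0_prv[OF assms(1,2) tO(3), of s] col0_prv[OF assms(1,2) tU(3), of s]
      col0_nth[OF tO(3), of s] col0_nth[OF tU(3), of s] tO tU bO bU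
    by (simp add: wr_def)
qed

lemma acoef_FF:
  assumes "wf_diag w" "odd (nbars w)"
  shows "acoef (w, s) n = FF s w n"
proof -
  have "(\<Sum>c\<in>{c \<in> crossings w. ind (w, s) c = n}. wr s c)
      = (\<Sum>c\<in>crossings w. if ind (w, s) c = n then wr s c else 0)"
    by (simp add: sum.inter_filter finite_crossings)
  also have "\<dots> = (\<Sum>c\<in>crossings w. if II s w c = n then wr s c else 0)"
    by (rule sum.cong) (auto simp: ind_eq[OF assms])
  finally show ?thesis unfolding acoef_def FF_def writhe_def by simp
qed


lemma ball_neq[simp]: "(\<forall>x\<in>S. x \<noteq> e) \<longleftrightarrow> e \<notin> S"
  by auto

lemma FF_eq:
  assumes "finite N" "crossings w' = crossings w \<union> N" "crossings w \<inter> N = {}"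
    "\<And>c. c \<in> crossings w \<Longrightarrow> II s w' c = II s w c"
    "(\<Sum>c\<in>N. if II s w' c = n then wr s c else 0) = (if n = 0 then (\<Sum>c\<in>N. wr s c) else 0)"
  shows "FF s w' n = FF s w n"
proof -
  have f: "finite (crossings w)" by (rule finite_crossings)
  have "(\<Sum>c\<in>crossings w'. if II s w' c = n then wr s c else 0)
     = (\<Sum>c\<in>crossings w. if II s w' c = n then wr s c else 0) + (\<Sum>c\<in>N. if II s w' c = n then wr s c else 0)"
    unfolding assms(2) using f assms(1,3) by (rule sum.union_disjoint)
  also have "(\<Sum>c\<in>crossings w. if II s w' c = n then wr s c else 0) = (\<Sum>c\<in>crossings w. if II s w c = n then wr s c else 0)"
    by (rule sum.cong) (auto simp: assms(4))
  finally have 1: "(\<Sum>c\<in>crossings w'. if II s w' c = n then wr s c else 0)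
     = (\<Sum>c\<in>crossings w. if II s w c = n then wr s c else 0) + (if n = 0 then (\<Sum>c\<in>N. wr s c) else 0)"
    using assms(5) by simp
  have 2: "(\<Sum>c\<in>crossings w'. wr s c) = (\<Sum>c\<in>crossings w. wr s c) + (\<Sum>c\<in>N. wr s c)"
    unfolding assms(2) using f assms(1,3) by (rule sum.union_disjoint)
  show ?thesis unfolding FF_def 1 2 by simp
qed

lemma FF_same:
  assumes "crossings w' = crossings w" "\<And>c. c \<in> crossings w \<Longrightarrow> II s w' c = II s w c"
  shows "FF s w' n = FF s w n"
  using FF_eq[of "{}" w' w s n] assms by simp

lemma bef_repl:
  assumes "fold (stp s) M = fold (stp s) M'" "e \<notin> set M" "e \<notin> set M'"
  shows "bef s (L @ M @ R) e = bef s (L @ M' @ R) e"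
  using assms by (auto simp: bef_def takeWhile_append)

lemma fold_repl:
  assumes "fold (stp s) M = fold (stp s) M'"
  shows "fold (stp s) (L @ M @ R) = fold (stp s) (L @ M' @ R)"
  by (simp only: fold_append assms)

lemma II_same:
  assumes "fold (stp s) w = fold (stp s) w'"
    "bef s w (OverP c) = bef s w' (OverP c)" "bef s w (UnderP c) = bef s w' (UnderP c)"
  shows "II s w c = II s w' c"
  using assms unfolding II_def fp_def by simp

lemma FF_agree:
  assumes "wf_diag w" "agree (crossings w) s s'"
  shows "FF s w n = FF s' w n"
proof -
  have st: "stp s e = stp s' e" if "e \<in> set w" for e
  proof (cases e)
    case (OverP c)
    then have "c \<in> crossings w" using that by (simp add: crossings_def)
    then show ?thesis using OverP assms(2) by (auto simp: agree_def wr_def)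
  next
    case (UnderP c)
    then have "c \<in> crossings w" using that wf_under[OF assms(1)] by simp
    then show ?thesis using UnderP assms(2) by (auto simp: agree_def wr_def)
  qed auto
  have fw: "fold (stp s) w = fold (stp s') w" by (intro ext fold_cong) (auto simp: st)
  have fpe: "fp s w = fp s' w" unfolding fp_def fw ..
  have bw: "bef s w e = bef s' w e" for e
    unfolding bef_def by (intro ext fold_cong) (auto dest: set_takeWhileD simp: st)
  have wre: "c \<in> crossings w \<Longrightarrow> wr s c = wr s' c" for c
    using assms(2) by (auto simp: agree_def wr_def)
  have IIe: "II s w c = II s' w c" if "c \<in> crossings w" for c
    unfolding II_def fpe bw using wre that by simp
  have s1: "(\<Sum>c\<in>crossings w. if II s w c = n then wr s c else 0)
      = (\<Sum>c\<in>crossings w. if II s' w c = n then wr s' c else 0)"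
    by (rule sum.cong) (auto simp: IIe wre)
  have s2: "(\<Sum>c\<in>crossings w. wr s c) = (\<Sum>c\<in>crossings w. wr s' c)"
    by (rule sum.cong) (auto simp: wre)
  show ?thesis unfolding FF_def s1 s2 ..
qed

lemma count_zero: "count_list w e \<le> 1 \<Longrightarrow> w = A @ e # B \<Longrightarrow> e \<notin> set A \<and> e \<notin> set B"
  by (auto simp: count_list_0_iff[symmetric])


lemma crossings_app: "crossings (A @ B) = crossings A \<union> crossings B"
  and crossings_cons: "crossings (e # B) = (case e of OverP c \<Rightarrow> insert c (crossings B) | _ \<Rightarrow> crossings B)"
  by (auto simp: crossings_def split: event.splits)

lemma crossings_nil: "crossings [] = {}" by (simp add: crossings_def)

lemma T2_lem:
  assumes "w = A @ [Bar, Bar] @ B" "w' = A @ B"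
  shows "nbars w = nbars w' + 2" "FF s w' n = FF s w n"
proof -
  show "nbars w = nbars w' + 2" using assms by (simp add: nbars_def)
  have fM: "fold (stp s) [Bar, Bar] = fold (stp s) []" by (auto simp: fun_eq_iff)
  have fw: "fold (stp s) w = fold (stp s) w'" using assms fold_repl[OF fM, of A B] by simp
  have b: "bef s w e = bef s w' e" if "e \<noteq> Bar" for e
    using bef_repl[OF fM, of e A B] assms that by simp
  show "FF s w' n = FF s w n"
  proof (rule FF_same)
    show "crossings w' = crossings w" using assms by (auto simp: crossings_def)
    fix d
    show "II s w' d = II s w d"
      by (intro II_same[symmetric] fw b; simp)
  qed
qed

lemma T3_lem1:
  assumes "wf_diag w" "w = A @ [OverP c] @ B @ [UnderP c] @ C"
    "w' = A @ [Bar, UnderP c, Bar] @ B @ [Bar, OverP c, Bar] @ C"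
  shows "nbars w' = nbars w + 4" "FF s w' n = FF s w n"
proof -
  show "nbars w' = nbars w + 4" using assms by (simp add: nbars_def)
  have f1: "fold (stp s) [OverP c] = fold (stp s) [Bar, UnderP c, Bar]" by (auto simp: fun_eq_iff)
  have f2: "fold (stp s) [UnderP c] = fold (stp s) [Bar, OverP c, Bar]" by (auto simp: fun_eq_iff)
  let ?w1 = "A @ [Bar, UnderP c, Bar] @ B @ [UnderP c] @ C"
  have fw: "fold (stp s) w = fold (stp s) w'"
    using assms fold_repl[OF f1, of A "B @ [UnderP c] @ C"]
      fold_repl[OF f2, of "A @ [Bar, UnderP c, Bar] @ B" C] by simp
  have b: "bef s w e = bef s w' e" if "e \<notin> {OverP c, UnderP c}" "e \<noteq> Bar" for e
  proof -
    have "bef s w e = bef s ?w1 e"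
      using bef_repl[OF f1, of e A "B @ [UnderP c] @ C"] assms that by simp
    also have "\<dots> = bef s w' e"
      using bef_repl[OF f2, of e "A @ [Bar, UnderP c, Bar] @ B" C] assms that by simp
    finally show ?thesis .
  qed
  have cO: "OverP c \<notin> set A" "OverP c \<notin> set B" "OverP c \<notin> set C"
    using count_zero[OF wf_count[OF assms(1)], of "OverP c" A "B @ [UnderP c] @ C"] assms(2) by auto
  have cU: "UnderP c \<notin> set A" "UnderP c \<notin> set B" "UnderP c \<notin> set C"
    using count_zero[OF wf_count[OF assms(1)], of "UnderP c" "A @ [OverP c] @ B" C] assms(2) by auto
  have IIc: "II s w' c = II s w c"
    unfolding II_def fp_def fw[symmetric] using cO cU assms(2,3)
    by (simp add: bef_def takeWhile_append)
  show "FF s w' n = FF s w n"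
  proof (rule FF_same)
    show "crossings w' = crossings w" using assms(2,3) by (auto simp: crossings_def)
    fix d assume "d \<in> crossings w"
    show "II s w' d = II s w d"
    proof (cases "d = c")
      case True then show ?thesis using IIc by simp
    qed (intro II_same[symmetric] fw b; simp)
  qed
qed

lemma T3_lem2:
  assumes "wf_diag w" "w = A @ [UnderP c] @ B @ [OverP c] @ C"
    "w' = A @ [Bar, OverP c, Bar] @ B @ [Bar, UnderP c, Bar] @ C"
  shows "nbars w' = nbars w + 4" "FF s w' n = FF s w n"
proof -
  show "nbars w' = nbars w + 4" using assms by (simp add: nbars_def)
  have f1: "fold (stp s) [OverP c] = fold (stp s) [Bar, UnderP c, Bar]" by (auto simp: fun_eq_iff)
  have f2: "fold (stp s) [UnderP c] = fold (stp s) [Bar, OverP c, Bar]" by (auto simp: fun_eq_iff)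
  let ?w1 = "A @ [Bar, OverP c, Bar] @ B @ [OverP c] @ C"
  have fw: "fold (stp s) w = fold (stp s) w'"
    using assms fold_repl[OF f2, of A "B @ [OverP c] @ C"]
      fold_repl[OF f1, of "A @ [Bar, OverP c, Bar] @ B" C] by simp
  have b: "bef s w e = bef s w' e" if "e \<notin> {OverP c, UnderP c}" "e \<noteq> Bar" for e
  proof -
    have "bef s w e = bef s ?w1 e"
      using bef_repl[OF f2, of e A "B @ [OverP c] @ C"] assms that by simp
    also have "\<dots> = bef s w' e"
      using bef_repl[OF f1, of e "A @ [Bar, OverP c, Bar] @ B" C] assms that by simp
    finally show ?thesis .
  qed
  have cO: "UnderP c \<notin> set A" "UnderP c \<notin> set B" "UnderP c \<notin> set C"
    using count_zero[OF wf_count[OF assms(1)], of "UnderP c" A "B @ [OverP c] @ C"] assms(2) by auto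
  have cU: "OverP c \<notin> set A" "OverP c \<notin> set B" "OverP c \<notin> set C"
    using count_zero[OF wf_count[OF assms(1)], of "OverP c" "A @ [UnderP c] @ B" C] assms(2) by auto
  have IIc: "II s w' c = II s w c"
    unfolding II_def fp_def fw[symmetric] using cO cU assms(2,3)
    by (simp add: bef_def takeWhile_append add_ac)
  show "FF s w' n = FF s w n"
  proof (rule FF_same)
    show "crossings w' = crossings w" using assms(2,3) by (auto simp: crossings_def)
    fix d assume "d \<in> crossings w"
    show "II s w' d = II s w d"
    proof (cases "d = c")
      case True then show ?thesis using IIc by simp
    qed (intro II_same[symmetric] fw b; simp)
  qed
qed


lemma R1_lem:
  assumes "wf_diag w" "c \<notin> crossings w" "w = A @ B"
    "w' = A @ [OverP c, UnderP c] @ B \<or> w' = A @ [UnderP c, OverP c] @ B"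
  shows "nbars w' = nbars w" "FF s w' n = FF s w n"
proof -
  show "nbars w' = nbars w" using assms(3,4) by (auto simp: nbars_def)
  obtain M where M: "w' = A @ M @ B" "M = [OverP c, UnderP c] \<or> M = [UnderP c, OverP c]"
    using assms(4) by blast
  have fM: "fold (stp s) [] = fold (stp s) M" using M(2) by (auto simp: fun_eq_iff)
  have fw: "fold (stp s) w = fold (stp s) w'" using assms(3) M fold_repl[OF fM, of A B] by simp
  have b: "bef s w e = bef s w' e" if "e \<notin> {OverP c, UnderP c}" "e \<noteq> Bar" for e
    using bef_repl[OF fM, of e A B] assms(3) M(1) that M(2) by auto
  have nO: "OverP c \<notin> set A" using assms(2,3) by (auto simp: crossings_def)
  have nU: "UnderP c \<notin> set A" using assms(2,3) wf_under[OF assms(1), of c] by auto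
  have IIc: "II s w' c = 0"
    using M nO nU unfolding II_def by (auto simp: bef_def takeWhile_append)
  show "FF s w' n = FF s w n"
  proof (rule FF_eq[of "{c}"])
    show "crossings w' = crossings w \<union> {c}" using assms(3) M by (auto simp: crossings_def)
    show "crossings w \<inter> {c} = {}" using assms(2) by simp
    fix d assume "d \<in> crossings w"
    then have "d \<noteq> c" using assms(2) by auto
    then show "II s w' d = II s w d"
      by (intro II_same[symmetric] fw b; simp)
  qed (auto simp: IIc)
qed

lemma R2_lem:
  assumes "wf_diag w" "c \<notin> crossings w" "d \<notin> crossings w" "c \<noteq> d" "s c \<noteq> s d"
    "w = A @ B @ C"
    "w' = A @ [OverP c, OverP d] @ B @ [UnderP c, UnderP d] @ C \<or>
     w' = A @ [OverP c, OverP d] @ B @ [UnderP d, UnderP c] @ C"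
  shows "nbars w' = nbars w" "FF s w' n = FF s w n"
proof -
  show "nbars w' = nbars w" using assms(6,7) by (auto simp: nbars_def)
  have wcd: "wr s c + wr s d = 0" using assms(5) by (auto simp: wr_def)
  obtain M where M: "w' = A @ [OverP c, OverP d] @ B @ M @ C"
      "M = [UnderP c, UnderP d] \<or> M = [UnderP d, UnderP c]"
    using assms(7) by blast
  have f1: "fold (stp s) [] = fold (stp s) [OverP c, OverP d]" using wcd by (auto simp: fun_eq_iff)
  have f2: "fold (stp s) [] = fold (stp s) M" using M(2) wcd by (auto simp: fun_eq_iff)
  let ?w1 = "A @ [OverP c, OverP d] @ B @ C"
  have fw: "fold (stp s) w = fold (stp s) w'"
    using assms(6) M fold_repl[OF f1, of A "B @ C"] fold_repl[OF f2, of "A @ [OverP c, OverP d] @ B" C] by simp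
  have b: "bef s w e = bef s w' e" if "e \<notin> {OverP c, UnderP c, OverP d, UnderP d}" for e
  proof -
    have "bef s w e = bef s ?w1 e"
      using bef_repl[OF f1, of e A "B @ C"] assms(6) that by simp
    also have "\<dots> = bef s w' e"
      using bef_repl[OF f2, of e "A @ [OverP c, OverP d] @ B" C] M that by auto
    finally show ?thesis .
  qed
  have nO: "OverP c \<notin> set w" "OverP d \<notin> set w" using assms(2,3) by (auto simp: crossings_def)
  have nU: "UnderP c \<notin> set w" "UnderP d \<notin> set w"
    using assms(2,3) wf_under[OF assms(1)] by auto
  have nn: "OverP c \<notin> set A" "OverP c \<notin> set B" "OverP d \<notin> set A" "OverP d \<notin> set B"
    "UnderP c \<notin> set A" "UnderP c \<notin> set B" "UnderP d \<notin> set A" "UnderP d \<notin> set B"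
    using nO nU assms(6) by auto
  have IIcd: "II s w' c = II s w' d"
    using M(2)
  proof (elim disjE)
    assume "M = [UnderP c, UnderP d]"
    then show ?thesis unfolding II_def M(1) using nn assms(4) wcd
      by (simp add: bef_def takeWhile_append)
  next
    assume "M = [UnderP d, UnderP c]"
    then show ?thesis unfolding II_def M(1) using nn assms(4) wcd
      by (simp add: bef_def takeWhile_append)
  qed
  show "FF s w' n = FF s w n"
  proof (rule FF_eq[of "{c, d}"])
    show "crossings w' = crossings w \<union> {c, d}" using assms(6) M by (auto simp: crossings_def)
    show "crossings w \<inter> {c, d} = {}" using assms(2,3) by simp
    fix e assume "e \<in> crossings w"
    then have "e \<noteq> c" "e \<noteq> d" using assms(2,3) by auto
    then show "II s w' e = II s w e"
      by (intro II_same[symmetric] fw b; simp)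
  next
    show "(\<Sum>c\<in>{c, d}. if II s w' c = n then wr s c else 0) = (if n = 0 then \<Sum>c\<in>{c, d}. wr s c else 0)"
      using assms(4) IIcd wcd by simp
  qed simp
qed


lemma not_in_prefix:
  assumes "count_list w x \<le> 1" "w = P @ Y @ Q" "x \<in> set Y"
  shows "x \<notin> set P"
proof -
  have "count_list Y x \<noteq> 0" using assms(3) by (simp add: count_list_0_iff)
  then have "count_list P x = 0" using assms(1,2) by simp
  then show ?thesis by (simp add: count_list_0_iff)
qed

lemma bef_mid:
  assumes "e \<in> set Y" "e \<notin> set P"
  shows "bef s (P @ Y @ Q) e = bef s Y e \<circ> fold (stp s) P"
  using assms by (simp add: bef_def takeWhile_append)

lemma cross_pair:
  assumes "wf_diag w" "wf_diag w'" "OverP k \<in> set Y1" "UnderP k \<in> set Y2"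
    "\<exists>P Q P' Q'. w = P @ Y1 @ Q \<and> w' = P' @ rev Y1 @ Q' \<and> fold (stp s) P = fold (stp s) P'"
    "\<exists>P Q P' Q'. w = P @ Y2 @ Q \<and> w' = P' @ rev Y2 @ Q' \<and> fold (stp s) P = fold (stp s) P'"
    "fold (stp s) w = fold (stp s) w'"
    "\<And>t t'. bef s Y1 (OverP k) t - bef s (rev Y1) (OverP k) t
        = bef s Y2 (UnderP k) t' - bef s (rev Y2) (UnderP k) t'"
  shows "II s w k = II s w' k"
proof -
  obtain P1 Q1 P1' Q1' where 1: "w = P1 @ Y1 @ Q1" "w' = P1' @ rev Y1 @ Q1'" "fold (stp s) P1 = fold (stp s) P1'"
    using assms(5) by blast
  obtain P2 Q2 P2' Q2' where 2: "w = P2 @ Y2 @ Q2" "w' = P2' @ rev Y2 @ Q2'" "fold (stp s) P2 = fold (stp s) P2'"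
    using assms(6) by blast
  have n1: "OverP k \<notin> set P1" using not_in_prefix[OF wf_count[OF assms(1)] 1(1) assms(3)] by simp
  have n1': "OverP k \<notin> set P1'" using not_in_prefix[OF wf_count[OF assms(2)] 1(2)] assms(3) by simp
  have n2: "UnderP k \<notin> set P2" using not_in_prefix[OF wf_count[OF assms(1)] 2(1) assms(4)] by simp
  have n2': "UnderP k \<notin> set P2'" using not_in_prefix[OF wf_count[OF assms(2)] 2(2)] assms(4) by simp
  have fpe: "fp s w' = fp s w" unfolding fp_def assms(7) ..
  have a1: "bef s w (OverP k) = bef s Y1 (OverP k) \<circ> fold (stp s) P1"
    using bef_mid[OF assms(3) n1] 1(1) by simp
  have a2: "bef s w (UnderP k) = bef s Y2 (UnderP k) \<circ> fold (stp s) P2"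
    using bef_mid[OF assms(4) n2] 2(1) by simp
  have a1': "bef s w' (OverP k) = bef s (rev Y1) (OverP k) \<circ> fold (stp s) P1"
    using bef_mid[of "OverP k" "rev Y1", OF _ n1'] assms(3) 1(2,3) by simp
  have a2': "bef s w' (UnderP k) = bef s (rev Y2) (UnderP k) \<circ> fold (stp s) P2"
    using bef_mid[of "UnderP k" "rev Y2", OF _ n2'] assms(4) 2(2,3) by simp
  show ?thesis unfolding II_def fpe a1 a2 a1' a2' o_def
    using assms(8)[of "fold (stp s) P1 (fp s w)" "fold (stp s) P2 (fp s w)"] by simp
qed

lemma chain3:
  assumes "fold (stp s) (rev X1) = fold (stp s) X1" "fold (stp s) (rev X2) = fold (stp s) X2"
    "fold (stp s) (rev X3) = fold (stp s) X3"
    "w = A @ X1 @ B @ X2 @ C @ X3 @ E" "w' = A @ rev X1 @ B @ rev X2 @ C @ rev X3 @ E"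
  shows "fold (stp s) w = fold (stp s) w'"
    and "e \<notin> set X1 \<Longrightarrow> e \<notin> set X2 \<Longrightarrow> e \<notin> set X3 \<Longrightarrow> bef s w e = bef s w' e"
    and "Y \<in> {X1, X2, X3} \<Longrightarrow> \<exists>P Q P' Q'. w = P @ Y @ Q \<and> w' = P' @ rev Y @ Q' \<and> fold (stp s) P = fold (stp s) P'"
proof -
  show "fold (stp s) w = fold (stp s) w'"
    unfolding assms(4,5) by (simp only: fold_append assms(1-3))
  show "bef s w e = bef s w' e" if "e \<notin> set X1" "e \<notin> set X2" "e \<notin> set X3"
  proof -
    have "bef s w e = bef s (A @ rev X1 @ B @ X2 @ C @ X3 @ E) e"
      unfolding assms(4) by (rule bef_repl) (use assms that in auto)
    also have "\<dots> = bef s ((A @ rev X1 @ B) @ rev X2 @ (C @ X3 @ E)) e"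
      using bef_repl[of s X2 "rev X2" e "A @ rev X1 @ B" "C @ X3 @ E"] assms that by simp
    also have "\<dots> = bef s ((A @ rev X1 @ B @ rev X2 @ C) @ rev X3 @ E) e"
      using bef_repl[of s X3 "rev X3" e "A @ rev X1 @ B @ rev X2 @ C" E] assms that by simp
    finally show ?thesis using assms(5) by simp
  qed
  assume Y: "Y \<in> {X1, X2, X3}"
  have c1: "w = A @ X1 @ (B @ X2 @ C @ X3 @ E) \<and> w' = A @ rev X1 @ (B @ rev X2 @ C @ rev X3 @ E)"
    using assms(4,5) by simp
  have c2: "w = (A @ X1 @ B) @ X2 @ (C @ X3 @ E) \<and> w' = (A @ rev X1 @ B) @ rev X2 @ (C @ rev X3 @ E)
     \<and> fold (stp s) (A @ X1 @ B) = fold (stp s) (A @ rev X1 @ B)"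
    using assms by (simp only: append_assoc fold_append)
  have c3: "w = (A @ X1 @ B @ X2 @ C) @ X3 @ E \<and> w' = (A @ rev X1 @ B @ rev X2 @ C) @ rev X3 @ E
     \<and> fold (stp s) (A @ X1 @ B @ X2 @ C) = fold (stp s) (A @ rev X1 @ B @ rev X2 @ C)"
    using assms by (simp only: append_assoc fold_append)
  show "\<exists>P Q P' Q'. w = P @ Y @ Q \<and> w' = P' @ rev Y @ Q' \<and> fold (stp s) P = fold (stp s) P'"
    using Y c1 c2 c3 by blast
qed

lemma pair_comm:
  assumes "e1 \<noteq> Bar" "e2 \<noteq> Bar"
  shows "fold (stp s) (rev [e1, e2]) = fold (stp s) [e1, e2]"
  using assms by (cases e1; cases e2) (auto simp: fun_eq_iff)


lemma R3_lem:
  assumes w: "wf_diag w" and w': "wf_diag w'" and e: "e \<in> {1, -1}"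
    and p: "R3_pairs s e a b c = (pT, pM, pB)"
    and X: "(X1, X2, X3) \<in> {(pT, pM, pB), (pT, pB, pM), (pM, pT, pB),
                         (pM, pB, pT), (pB, pT, pM), (pB, pM, pT)}"
    and ww: "w = A @ X1 @ B @ X2 @ C @ X3 @ E"
    and ww': "w' = A @ rev X1 @ B @ rev X2 @ C @ rev X3 @ E"
  shows "nbars w' = nbars w" "FF s w' n = FF s w n"
proof -
  show "nbars w' = nbars w" using ww ww' by (simp add: nbars_def)
  have pT: "pT = (if e = - wr s b then [OverP a, OverP b] else [OverP b, OverP a])"
   and pM: "pM = (if e = - wr s c then [UnderP a, OverP c] else [OverP c, UnderP a])"
   and pB: "pB = (if e = - (wr s a * wr s b * wr s c) then [UnderP b, UnderP c] else [UnderP c, UnderP b])"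
    using p by (auto simp: R3_pairs_def)
  have fT: "fold (stp s) (rev pT) = fold (stp s) pT" unfolding pT by (auto simp: fun_eq_iff)
  have fM: "fold (stp s) (rev pM) = fold (stp s) pM" unfolding pM by (auto simp: fun_eq_iff)
  have fB: "fold (stp s) (rev pB) = fold (stp s) pB" unfolding pB by (auto simp: fun_eq_iff)
  have fX: "fold (stp s) (rev X1) = fold (stp s) X1" "fold (stp s) (rev X2) = fold (stp s) X2"
    "fold (stp s) (rev X3) = fold (stp s) X3"
    using X fT fM fB by auto
  note ch = chain3[OF fX ww ww']
  have setX: "set X1 \<union> set X2 \<union> set X3 = set pT \<union> set pM \<union> set pB" using X by auto
  have cnt: "count_list pT x + count_list pM x + count_list pB x \<le> count_list w x" for x
    using X ww by auto
  have ab: "a \<noteq> b"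
  proof
    assume "a = b"
    then have "count_list pT (OverP a) = 2" unfolding pT by simp
    then show False using cnt[of "OverP a"] wf_count[OF w, of "OverP a"] by simp
  qed
  have ac: "a \<noteq> c"
  proof
    assume "a = c"
    then have "count_list pT (OverP a) \<ge> 1" "count_list pM (OverP a) \<ge> 1" unfolding pT pM by auto
    then show False using cnt[of "OverP a"] wf_count[OF w, of "OverP a"] by simp
  qed
  have bc: "b \<noteq> c"
  proof
    assume "b = c"
    then have "count_list pT (OverP b) \<ge> 1" "count_list pM (OverP b) \<ge> 1" unfolding pT pM by auto
    then show False using cnt[of "OverP b"] wf_count[OF w, of "OverP b"] by simp
  qed
  have eo: "e = 1 \<or> e = -1" using e by auto
  have XT: "pT \<in> {X1, X2, X3}" and XM: "pM \<in> {X1, X2, X3}" and XB: "pB \<in> {X1, X2, X3}"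
    using X by auto
  have Ia: "II s w a = II s w' a"
  proof (rule cross_pair[OF w w' _ _ ch(3)[OF XT] ch(3)[OF XM] ch(1)])
    show "OverP a \<in> set pT" "UnderP a \<in> set pM" unfolding pT pM by auto
    fix t t'
    show "bef s pT (OverP a) t - bef s (rev pT) (OverP a) t = bef s pM (UnderP a) t' - bef s (rev pM) (UnderP a) t'"
      unfolding pT pM using ab ac bc eo by (auto simp: bef_def wr_def)
  qed
  have Ib: "II s w b = II s w' b"
  proof (rule cross_pair[OF w w' _ _ ch(3)[OF XT] ch(3)[OF XB] ch(1)])
    show "OverP b \<in> set pT" "UnderP b \<in> set pB" unfolding pT pB by auto
    fix t t'
    show "bef s pT (OverP b) t - bef s (rev pT) (OverP b) t = bef s pB (UnderP b) t' - bef s (rev pB) (UnderP b) t'"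
      unfolding pT pB using ab ac bc eo by (auto simp: bef_def wr_def)
  qed
  have Ic: "II s w c = II s w' c"
  proof (rule cross_pair[OF w w' _ _ ch(3)[OF XM] ch(3)[OF XB] ch(1)])
    show "OverP c \<in> set pM" "UnderP c \<in> set pB" unfolding pM pB by auto
    fix t t'
    show "bef s pM (OverP c) t - bef s (rev pM) (OverP c) t = bef s pB (UnderP c) t' - bef s (rev pB) (UnderP c) t'"
      unfolding pM pB using ab ac bc eo by (auto simp: bef_def wr_def)
  qed
  show "FF s w' n = FF s w n"
  proof (rule FF_same)
    show "crossings w' = crossings w" using ww ww' by (auto simp: crossings_def)
    fix d assume "d \<in> crossings w"
    show "II s w' d = II s w d"
    proof (cases "d \<in> {a, b, c}")
      case True then show ?thesis using Ia Ib Ic by auto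
    next
      case False
      have "OverP d \<notin> set pT \<union> set pM \<union> set pB" "UnderP d \<notin> set pT \<union> set pM \<union> set pB"
        using False unfolding pT pM pB by auto
      then have "OverP d \<notin> set X1 \<union> set X2 \<union> set X3" "UnderP d \<notin> set X1 \<union> set X2 \<union> set X3"
        unfolding setX by auto
      then show ?thesis
        by (intro II_same[symmetric] ch(1) ch(2)) auto
    qed
  qed
qed


lemma rot_lem:
  assumes w: "wf_diag w" and w': "wf_diag w'" and r: "w' = rotate1 w"
  shows "nbars w' = nbars w" "odd (nbars w) \<Longrightarrow> FF s w' n = FF s w n"
proof -
  show nb: "nbars w' = nbars w" using r by (cases w) (auto simp: nbars_def)
  assume odd: "odd (nbars w)"
  obtain e0 u where wu: "w = e0 # u" using odd_nonempty[OF odd] by (cases w) auto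
  have w'u: "w' = u @ [e0]" using r wu by simp
  define x0 where "x0 = fp s w"
  have fx: "fold (stp s) w x0 = x0" using fp_ex(1)[OF w odd] x0_def by simp
  have fp': "fp s w' = stp s e0 x0"
  proof -
    have "fold (stp s) w' (stp s e0 x0) = stp s e0 x0" using fx wu w'u by simp
    then show ?thesis using fp_ex(2)[OF w'] odd nb by simp
  qed
  have rb: "bef s w' e (stp s e0 x0) = bef s w e x0" if "e \<in> set w" "e \<noteq> Bar" for e
  proof (cases "e = e0")
    case True
    have "e \<notin> set u" using not_in_prefix[OF wf_count[OF w that(2)], of "[e]" u "[]"] wu True
      using count_zero[OF wf_count[OF w that(2)], of "[]" u] by simp
    then show ?thesis using True wu w'u fx by (simp add: bef_def takeWhile_append)
  next
    case False
    then have "e \<in> set u" using that wu by simp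
    then show ?thesis using False wu w'u by (simp add: bef_def takeWhile_append)
  qed
  show "FF s w' n = FF s w n"
  proof (rule FF_same)
    show "crossings w' = crossings w" using wu w'u by (auto simp: crossings_def)
    fix c assume c: "c \<in> crossings w"
    have "OverP c \<in> set w" using c by (simp add: crossings_def)
    moreover have "UnderP c \<in> set w"
      using c w unfolding crossings_def wf_diag_def by (metis count_list_0_iff mem_Collect_eq)
    ultimately show "II s w' c = II s w c"
      unfolding II_def fp' using rb x0_def by simp
  qed
qed

lemma stp_map: "(\<forall>c. s' (f c) = s c) \<Longrightarrow> stp s' (map_ev f e) = stp s e"
  by (cases e) (auto simp: wr_def)

lemma nbars_map: "nbars (map (map_ev f) w) = nbars w"
proof -
  have "count_list (map (map_ev f) w) Bar = count_list w Bar"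
  proof (induction w)
    case (Cons x w)
    then show ?case by (cases x) auto
  qed simp
  then show ?thesis by (simp add: nbars_def)
qed

lemma ren_lem:
  assumes f: "inj f" and ww: "w' = map (map_ev f) w" and s: "\<forall>c. s' (f c) = s c"
  shows "nbars w' = nbars w" "FF s' w' n = FF s w n"
proof -
  show "nbars w' = nbars w" using ww nbars_map by simp
  have sm: "stp s' \<circ> map_ev f = stp s" using stp_map[of s' f s, OF s] by (simp add: fun_eq_iff)
  have fl: "fold (stp s') (map (map_ev f) xs) = fold (stp s) xs" for xs
    by (simp add: fold_map sm)
  have fpe: "fp s' w' = fp s w" unfolding fp_def ww fl ..
  have injm: "map_ev f x = map_ev f y \<longleftrightarrow> x = y" for x y
    by (cases x; cases y) (auto simp: inj_eq[OF f])
  have bm: "bef s' w' (map_ev f e) = bef s w e" for e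
  proof -
    have "(\<lambda>x. x \<noteq> map_ev f e) \<circ> map_ev f = (\<lambda>x. x \<noteq> e)" using injm by (auto simp: fun_eq_iff)
    then show ?thesis unfolding bef_def ww takeWhile_map fl by simp
  qed
  have cr: "crossings w' = f ` crossings w"
  proof
    show "crossings w' \<subseteq> f ` crossings w"
    proof
      fix d assume "d \<in> crossings w'"
      then obtain x where x: "x \<in> set w" "map_ev f x = OverP d" using ww by (auto simp: crossings_def)
      obtain c where "x = OverP c" "d = f c" by (cases x) (use x(2) in auto)
      then show "d \<in> f ` crossings w" using x(1) by (auto simp: crossings_def)
    qed
    show "f ` crossings w \<subseteq> crossings w'" using ww by (force simp: crossings_def)
  qed
  have IIm: "II s' w' (f c) = II s w c" for c
    using bm[of "OverP c"] bm[of "UnderP c"] s unfolding II_def fpe by (simp add: wr_def)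
  have wrm: "wr s' (f c) = wr s c" for c using s by (simp add: wr_def)
  have inj_on: "inj_on f (crossings w)" using inj_on_subset[OF f subset_UNIV] .
  show "FF s' w' n = FF s w n"
    unfolding FF_def cr sum.reindex[OF inj_on] o_def IIm wrm ..
qed

lemma step_ok:
  assumes "tw_step D D'"
  shows "(even (nbars (fst D)) \<longleftrightarrow> even (nbars (fst D')))
    \<and> (odd (nbars (fst D)) \<longrightarrow> FF (snd D) (fst D) n = FF (snd D') (fst D') n)"
proof -
  obtain w s where D: "D = (w, s)" by (cases D)
  obtain w' s' where D': "D' = (w', s')" by (cases D')
  have w: "wf_diag w" and w': "wf_diag w'" using assms D D' by (auto simp: tw_step_def)
  have mv: "triv_move (w, s) (w', s') \<or> R1_move (w, s) (w', s') \<or> R2_move (w, s) (w', s') \<or>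
      R3_move (w, s) (w', s') \<or> T2_move (w, s) (w', s') \<or> T3_move (w, s) (w', s')"
    using assms D D' by (simp add: tw_step_def)
  have "(even (nbars w) \<longleftrightarrow> even (nbars w')) \<and> (odd (nbars w) \<longrightarrow> FF s w n = FF s' w' n)"
    using mv
  proof (elim disjE)
    assume "triv_move (w, s) (w', s')"
    then consider "w' = rotate1 w" "s' = s"
      | g where "inj g" "w' = map (map_ev g) w" "\<forall>c. s' (g c) = s c"
      | "w' = w" "agree (crossings w) s s'"
      unfolding triv_move_def by auto
    then show ?thesis
    proof cases
      case 1 then show ?thesis using rot_lem(1)[OF w w' 1(1)] rot_lem(2)[OF w w' 1(1), of s n] by simp
    next
      case 2 then show ?thesis using ren_lem(1)[OF 2] ren_lem(2)[OF 2, of n] by simp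
    next
      case 3 then show ?thesis using FF_agree[OF w 3(2), of n] by simp
    qed
  next
    assume "R1_move (w, s) (w', s')"
    then obtain A B c where "w = A @ B" "c \<notin> crossings w"
      "w' = A @ [OverP c, UnderP c] @ B \<or> w' = A @ [UnderP c, OverP c] @ B"
      "agree (crossings w) s s'" unfolding R1_move_def by auto
    then show ?thesis using R1_lem(1)[OF w, of c A B w'] R1_lem(2)[OF w, of c A B w' s' n] FF_agree[OF w, of s s' n] by simp
  next
    assume "R2_move (w, s) (w', s')"
    then obtain A B C c d where "w = A @ B @ C" "c \<noteq> d" "c \<notin> crossings w" "d \<notin> crossings w"
      "w' = A @ [OverP c, OverP d] @ B @ [UnderP c, UnderP d] @ C \<or>
       w' = A @ [OverP c, OverP d] @ B @ [UnderP d, UnderP c] @ C"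
      "s' c \<noteq> s' d" "agree (crossings w) s s'" by (simp only: R2_move_def fst_conv snd_conv) blast
    then show ?thesis using R2_lem(1)[OF w, of c d s' A B C w'] R2_lem(2)[OF w, of c d s' A B C w' n] FF_agree[OF w, of s s' n] by simp
  next
    assume "R3_move (w, s) (w', s')"
    then obtain e a b c pT pM pB A B C E X1 X2 X3 where H: "s' = s"
      "e \<in> {1, -1}" "R3_pairs s e a b c = (pT, pM, pB)"
      "(X1, X2, X3) \<in> {(pT, pM, pB), (pT, pB, pM), (pM, pT, pB),
                         (pM, pB, pT), (pB, pT, pM), (pB, pM, pT)}"
      "w = A @ X1 @ B @ X2 @ C @ X3 @ E"
      "w' = A @ rev X1 @ B @ rev X2 @ C @ rev X3 @ E"
      by (simp only: R3_move_def fst_conv snd_conv) blast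
    have "nbars w' = nbars w" by (rule R3_lem(1)[OF w w' H(2-6)])
    moreover have "FF s w' n = FF s w n" by (rule R3_lem(2)[OF w w' H(2-6)])
    ultimately show ?thesis using H(1) by simp
  next
    assume "T2_move (w, s) (w', s')"
    then obtain A B where "s' = s" "w = A @ [Bar, Bar] @ B" "w' = A @ B"
      unfolding T2_move_def by auto
    then show ?thesis using T2_lem(1)[of w A B w'] T2_lem(2)[of w A B w' s n] by simp
  next
    assume "T3_move (w, s) (w', s')"
    then obtain A B C c where ss: "s' = s" and
      "(w = A @ [OverP c] @ B @ [UnderP c] @ C \<and>
         w' = A @ [Bar, UnderP c, Bar] @ B @ [Bar, OverP c, Bar] @ C)
      \<or> (w = A @ [UnderP c] @ B @ [OverP c] @ C \<and>
         w' = A @ [Bar, OverP c, Bar] @ B @ [Bar, UnderP c, Bar] @ C)"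
      unfolding T3_move_def by auto
    then show ?thesis
    proof (elim disjE conjE)
      assume "w = A @ [OverP c] @ B @ [UnderP c] @ C"
        "w' = A @ [Bar, UnderP c, Bar] @ B @ [Bar, OverP c, Bar] @ C"
      then show ?thesis using T3_lem1(1)[OF w, of A c B C w'] T3_lem1(2)[OF w, of A c B C w' s n] ss by simp
    next
      assume "w = A @ [UnderP c] @ B @ [OverP c] @ C"
        "w' = A @ [Bar, OverP c, Bar] @ B @ [Bar, UnderP c, Bar] @ C"
      then show ?thesis using T3_lem2(1)[OF w, of A c B C w'] T3_lem2(2)[OF w, of A c B C w' s n] ss by simp
    qed
  qed
  then show ?thesis using D D' by simp
qed

lemma equiv_ok:
  assumes "tw_equiv D D'"
  shows "((wf_diag (fst D) \<and> odd (nbars (fst D))) \<longleftrightarrow> (wf_diag (fst D') \<and> odd (nbars (fst D'))))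
    \<and> ((wf_diag (fst D) \<and> odd (nbars (fst D))) \<longrightarrow> acoef D n = acoef D' n)"
  using assms
proof (induction rule: tw_equiv.induct)
  case (refl D)
  then show ?case by simp
next
  case (step D D')
  have w: "wf_diag (fst D)" "wf_diag (fst D')" using step by (auto simp: tw_step_def)
  have so: "(even (nbars (fst D)) \<longleftrightarrow> even (nbars (fst D')))
    \<and> (odd (nbars (fst D)) \<longrightarrow> FF (snd D) (fst D) n = FF (snd D') (fst D') n)"
    using step_ok[OF step] .
  have "odd (nbars (fst D)) \<Longrightarrow> acoef D n = acoef D' n"
  proof -
    assume o: "odd (nbars (fst D))"
    then have o': "odd (nbars (fst D'))" using so by simp
    have "acoef D n = FF (snd D) (fst D) n" using acoef_FF[OF w(1) o, of "snd D" n] by simp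
    also have "\<dots> = FF (snd D') (fst D') n" using so o by simp
    also have "\<dots> = acoef D' n" using acoef_FF[OF w(2) o', of "snd D'" n] by simp
    finally show ?thesis .
  qed
  then show ?case using w so by auto
next
  case (sym D D')
  then show ?case by auto
next
  case (trans D D' D'')
  then show ?case by auto
qed

theorem theorem7p4:
  fixes D D' :: diagram and n :: int
  assumes "wf_diag (fst D)"
    and "odd (nbars (fst D))"
    and "tw_equiv D D'"
  shows "acoef D n = acoef D' n"
  using equiv_ok[OF assms(3), of n] assms(1,2) by simp

end
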